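(* Let $\mathbf{c}=\{c_n\}_{n=-\infty}^{\infty}$ be a complex sequence such that, for some $\theta_0\in[0,\pi/2)$, $$c_n\pm c_{-n}\in K(\theta_0),\qquad n=1,2,\dots.$$ Suppose there exist a natural number $N_0$ and a constant $M(\mathbf c)>0$ such that $$\sum_{n=m}^{2m}|c_n-c_{n+1}|\le M(\mathbf c)\max_{m\le n<m+N_0}|c_n|\qquad\text{for all } m=1,2,\dots.$$ Let $f(x)=\sum_{k=-\infty}^{\infty}c_k e^{ikx}:=\lim_{n\to\infty}\sum_{k=-n}^{n}c_ke^{ikx}$ at every point $x$ where this limit exists, and $S_n(f,x)=\sum_{k=-n}^{n}c_ke^{ikx}$. Then ($f\in C_{2\pi}$ and $\lim_{n\to\infty}\|f-S_n(f)\|=0$) holds if and only if both $$\lim_{n\to\infty}nc_n=0\qquad\text{and}\qquad\sum_{n=1}^{\infty}|c_n+c_{-n}|<\infty.$$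
   Context: For $\theta\in[0,\pi/2]$, $K(\theta)=\{z\in\mathbb C: |\arg z|\le\theta\}$. $C_{2\pi}$ is the space of complex-valued continuous $2\pi$-periodic functions on $\mathbb R$ with norm $\|g\|=\max_{x\in\mathbb R}|g(x)|$. *)

theory Defs
  imports "HOL-Analysis.Analysis"
begin

text \<open>The closed sector K(theta) = {z : |arg z| <= theta}; Arg 0 = 0, so 0 belongs to it.\<close>
definition sector :: "real \<Rightarrow> complex set" where
  "sector \<theta> = {z. \<bar>Arg z\<bar> \<le> \<theta>}"

definition partial_sum :: "(int \<Rightarrow> complex) \<Rightarrow> nat \<Rightarrow> real \<Rightarrow> complex" where
  "partial_sum c n x = (\<Sum>k = - int n..int n. c k * exp (\<i> * of_int k * of_real x))"

text \<open>The pointwise sum f(x) = lim_n S_n(f,x) (meaningful where the limit exists).\<close>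
definition series_fun :: "(int \<Rightarrow> complex) \<Rightarrow> real \<Rightarrow> complex" where
  "series_fun c x = lim (\<lambda>n. partial_sum c n x)"

end

theory Submission imports Defs begin


definition tm :: "(int \<Rightarrow> complex) \<Rightarrow> nat \<Rightarrow> real \<Rightarrow> complex" where
  "tm c k x = c (int k) * exp (\<i> * of_nat k * of_real x) + c (- int k) * exp (- (\<i> * of_nat k * of_real x))"

lemma ps_Suc: "partial_sum c (Suc n) x = partial_sum c n x + tm c (Suc n) x"
proof -
  have e: "{- int (Suc n)..int (Suc n)} = insert (- int (Suc n)) (insert (int (Suc n)) {- int n..int n})"
    by auto
  show ?thesis unfolding partial_sum_def tm_def e
    by (simp add: algebra_simps)
qed

lemma ps_eq: "partial_sum c n x = c 0 + (\<Sum>k<n. tm c (Suc k) x)"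
proof (induction n)
  case 0 then show ?case by (simp add: partial_sum_def)
next
  case (Suc n) then show ?case by (simp only: ps_Suc) simp
qed

lemma ps_diff: "n \<le> n' \<Longrightarrow> partial_sum c n' x - partial_sum c n x = (\<Sum>k\<in>{n..<n'}. tm c (Suc k) x)"
  unfolding ps_eq by (simp add: sum_diff_nat_ivl[of 0 n n', symmetric] lessThan_atLeast0)

lemma exp_minus_exp: "exp (\<i> * complex_of_real t) - exp (- (\<i> * complex_of_real t)) = 2 * \<i> * complex_of_real (sin t)"
  by (simp add: sin_exp_eq[of "complex_of_real t"] sin_of_real[symmetric])

lemma tm_eq: "tm c k x = (c (int k) + c (- int k)) * exp (- (\<i> * of_nat k * of_real x))
     + 2 * \<i> * c (int k) * of_real (sin (real k * x))"
proof -
  have "tm c k x = (c (int k) + c (- int k)) * exp (- (\<i> * of_real (real k * x)))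
     + c (int k) * (exp (\<i> * of_real (real k * x)) - exp (- (\<i> * of_real (real k * x))))"
    unfolding tm_def by (simp add: algebra_simps)
  also have "\<dots> = (c (int k) + c (- int k)) * exp (- (\<i> * of_real (real k * x)))
     + 2 * \<i> * c (int k) * of_real (sin (real k * x))"
    by (simp only: exp_minus_exp) (simp add: algebra_simps)
  finally show ?thesis by (simp add: algebra_simps)
qed

lemma tm_odd: "tm c k x - tm c k (-x) = 2 * \<i> * (c (int k) - c (- int k)) * of_real (sin (real k * x))"
proof -
  have "tm c k x - tm c k (-x) = (c (int k) - c (- int k)) * (exp (\<i> * of_real (real k * x)) - exp (- (\<i> * of_real (real k * x))))"
    unfolding tm_def by (simp add: algebra_simps)
  then show ?thesis by (simp only: exp_minus_exp) (simp add: algebra_simps)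
qed

lemma sector_Re: assumes "z \<in> sector t" "t < pi/2" shows "cos t * cmod z \<le> Re z"
proof (cases "z = 0")
  case True then show ?thesis by simp
next
  case False
  have a: "\<bar>Arg z\<bar> \<le> t" using assms unfolding sector_def by auto
  have "cos t \<le> cos \<bar>Arg z\<bar>"
    using a assms(2) by (intro cos_monotone_0_pi_le) auto
  also have "cos \<bar>Arg z\<bar> = Re z / cmod z" using cos_Arg[OF False] by (simp add: abs_if)
  finally show ?thesis using False by (simp add: field_simps)
qed



definition W :: "nat \<Rightarrow> real \<Rightarrow> real" where "W k x = (\<Sum>j<k. sin (real j * x))"

lemma W_id: "2 * sin (x/2) * W k x = cos (x/2) - cos (real k * x - x/2)"
proof (induction k)
  case 0 then show ?case by (simp add: W_def)
next
  case (Suc k)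
  have "2 * sin (x/2) * W (Suc k) x = 2 * sin (x/2) * W k x + 2 * sin (x/2) * sin (real k * x)"
    by (simp add: W_def algebra_simps)
  also have "\<dots> = cos (x/2) - cos (real k * x - x/2) + 2 * sin (x/2) * sin (real k * x)"
    using Suc by simp
  also have "\<dots> = cos (x/2) - cos (real k * x + x/2)"
    by (simp add: cos_add cos_diff algebra_simps)
  also have "real k * x + x/2 = real (Suc k) * x - x/2" by (simp add: algebra_simps)
  finally show ?case .
qed

lemma W_bound: assumes "sin (x/2) \<noteq> 0" shows "\<bar>W k x\<bar> \<le> 1 / \<bar>sin (x/2)\<bar>"
proof -
  have "\<bar>2 * sin (x/2) * W k x\<bar> \<le> 2"
    unfolding W_id using abs_cos_le_one[of "x/2"] abs_cos_le_one[of "real k * x - x/2"] by linarith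
  then have "\<bar>sin (x/2)\<bar> * \<bar>W k x\<bar> \<le> 1" by (simp add: abs_mult)
  then show ?thesis using assms by (simp add: field_simps mult.commute)
qed

lemma sin_mult_le: "\<bar>sin (real k * x)\<bar> \<le> real k * \<bar>sin x\<bar>"
proof (induction k)
  case 0 then show ?case by simp
next
  case (Suc k)
  have "sin (real (Suc k) * x) = sin (real k * x) * cos x + cos (real k * x) * sin x"
    by (simp add: distrib_right sin_add)
  then have "\<bar>sin (real (Suc k) * x)\<bar> \<le> \<bar>sin (real k * x)\<bar> * \<bar>cos x\<bar> + \<bar>cos (real k * x)\<bar> * \<bar>sin x\<bar>"
    by (simp add: abs_mult[symmetric]) 
  also have "\<dots> \<le> \<bar>sin (real k * x)\<bar> + \<bar>sin x\<bar>"
    by (intro add_mono mult_left_le mult_left_le_one_le) (auto simp: abs_cos_le_one)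
  finally show ?case using Suc by (simp add: algebra_simps)
qed

lemma sin_half: "\<bar>sin (x::real)\<bar> \<le> 2 * \<bar>sin (x/2)\<bar>"
proof -
  have "sin x = 2 * sin (x/2) * cos (x/2)" using sin_double[of "x/2"] by simp
  then have "\<bar>sin x\<bar> = 2 * \<bar>sin (x/2)\<bar> * \<bar>cos (x/2)\<bar>" by (simp add: abs_mult)
  also have "\<dots> \<le> 2 * \<bar>sin (x/2)\<bar>" by (intro mult_left_le) (auto simp: abs_cos_le_one)
  finally show ?thesis .
qed

lemma abel:
  fixes u :: "nat \<Rightarrow> complex" and w :: "nat \<Rightarrow> real"
  assumes "p \<le> q"
  shows "(\<Sum>k\<in>{p..<q}. u k * of_real (w (Suc k) - w k)) =
    u q * of_real (w q) - u p * of_real (w p) - (\<Sum>k\<in>{p..<q}. (u (Suc k) - u k) * of_real (w (Suc k)))"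
proof -
  have "(\<Sum>k\<in>{p..<q}. u k * of_real (w (Suc k) - w k)) + (\<Sum>k\<in>{p..<q}. (u (Suc k) - u k) * of_real (w (Suc k)))
     = (\<Sum>k\<in>{p..<q}. (\<lambda>i. u i * of_real (w i)) (Suc k) - (\<lambda>i. u i * of_real (w i)) k)"
    by (simp add: sum.distrib[symmetric] algebra_simps)
  also have "\<dots> = u q * of_real (w q) - u p * of_real (w p)"
    by (rule sum_Suc_diff'[OF assms])
  finally show ?thesis by (simp add: algebra_simps)
qed



lemma Max_le_sum:
  fixes f :: "nat \<Rightarrow> real"
  assumes "finite A" "A \<noteq> {}" "\<And>i. 0 \<le> f i"
  shows "Max (f ` A) \<le> sum f A"
  using assms by (subst Max_le_iff) (auto intro: member_le_sum)

lemma V_bound: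
  fixes d :: "nat \<Rightarrow> complex"
  assumes gbv: "\<And>m. m \<ge> 1 \<Longrightarrow> (\<Sum>n\<in>{m..<2*m+1}. cmod (d n - d (Suc n))) \<le> M * Max ((\<lambda>n. cmod (d n)) ` {m..<m+N0})"
    and N0: "N0 \<ge> 1" and M: "M > 0"
    and small: "\<And>k. k \<ge> P \<Longrightarrow> real k * cmod (d k) \<le> eps"
    and P: "P \<ge> 1"
  shows "p \<ge> P \<Longrightarrow> (\<Sum>k\<in>{p..<q}. cmod (d k - d (Suc k))) \<le> 2 * M * eps / real p"
proof (induction "q - p" arbitrary: p rule: less_induct)
  case less
  have p1: "p \<ge> 1" using less P by simp
  have eps0: "eps \<ge> 0" using small[of P] by (smt (verit) mult_nonneg_nonneg norm_ge_zero of_nat_0_le_iff order_refl)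
  have maxb0: "\<forall>a\<in>{p..<p + N0}. cmod (d a) \<le> eps / real p"
  proof
    fix a assume a: "a \<in> {p..<p+N0}"
    then have "real a * cmod (d a) \<le> eps" using small less by auto
    moreover have "real p * cmod (d a) \<le> real a * cmod (d a)" using a by (intro mult_right_mono) auto
    ultimately show "cmod (d a) \<le> eps / real p" using p1 by (simp add: field_simps)
  qed
  have maxb: "Max ((\<lambda>n. cmod (d n)) ` {p..<p+N0}) \<le> eps / real p"
    using maxb0 N0 by (subst Max_le_iff) auto
  have blk: "(\<Sum>n\<in>{p..<2*p+1}. cmod (d n - d (Suc n))) \<le> M * eps / real p"
    using gbv[OF p1] mult_left_mono[OF maxb, of M] M by simp
  show ?case
  proof (cases "q \<le> 2*p+1")
    case True
    have "(\<Sum>k\<in>{p..<q}. cmod (d k - d (Suc k))) \<le> (\<Sum>n\<in>{p..<2*p+1}. cmod (d n - d (Suc n)))"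
      using True by (intro sum_mono2) auto
    also have "\<dots> \<le> M * eps / real p" by (rule blk)
    also have "\<dots> \<le> 2 * M * eps / real p" using M eps0 p1 by (simp add: divide_right_mono)
    finally show ?thesis .
  next
    case False
    have "(\<Sum>k\<in>{p..<q}. cmod (d k - d (Suc k))) = (\<Sum>n\<in>{p..<2*p+1}. cmod (d n - d (Suc n))) + (\<Sum>k\<in>{2*p+1..<q}. cmod (d k - d (Suc k)))"
      using False by (subst sum.atLeastLessThan_concat) auto
    also have "(\<Sum>k\<in>{2*p+1..<q}. cmod (d k - d (Suc k))) \<le> 2 * M * eps / real (2*p+1)"
      using less.hyps[of "2*p+1"] less.prems False by auto
    also have "2 * M * eps / real (2*p+1) \<le> M * eps / real p"
      using M eps0 p1 by (simp add: field_simps)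
    finally have "(\<Sum>k\<in>{p..<q}. cmod (d k - d (Suc k))) \<le> (\<Sum>n\<in>{p..<2*p+1}. cmod (d n - d (Suc n))) + M * eps / real p" by simp
    then have "(\<Sum>k\<in>{p..<q}. cmod (d k - d (Suc k))) \<le> M * eps / real p + M * eps / real p" using blk by linarith
    then show ?thesis by (simp add: field_simps)
  qed
qed



lemma sine_tail:
  fixes d :: "nat \<Rightarrow> complex"
  assumes gbv: "\<And>m. m \<ge> 1 \<Longrightarrow> (\<Sum>n\<in>{m..<2*m+1}. cmod (d n - d (Suc n))) \<le> M * Max ((\<lambda>n. cmod (d n)) ` {m..<m+N0})"
    and N0: "N0 \<ge> 1" and M: "M > 0"
    and small: "\<And>k. k \<ge> P \<Longrightarrow> real k * cmod (d k) \<le> eps"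
    and P: "P \<ge> 1" and n: "n \<ge> P"
  shows "cmod (\<Sum>k\<in>{n..<q}. d k * of_real (sin (real k * x))) \<le> (4 + 2*M) * eps"
proof -
  define s where "s = \<bar>sin (x/2)\<bar>"
  have eps0: "eps \<ge> 0" using small[of P] by (smt (verit) mult_nonneg_nonneg norm_ge_zero of_nat_0_le_iff order_refl)
  have s1: "s \<le> 1" unfolding s_def by (rule abs_sin_le_one)
  have sinb: "\<bar>sin (real k * x)\<bar> \<le> 2 * real k * s" for k
  proof -
    have "real k * \<bar>sin x\<bar> \<le> real k * (2 * \<bar>sin (x/2)\<bar>)" using sin_half[of x] by (intro mult_left_mono) auto
    then show ?thesis using sin_mult_le[of k x] unfolding s_def by simp
  qed
  have termb: "cmod (d k * of_real (sin (real k * x))) \<le> 2 * eps * s" if k: "k \<ge> P" for k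
  proof -
    have "cmod (d k * of_real (sin (real k * x))) = cmod (d k) * \<bar>sin (real k * x)\<bar>"
      by (simp add: norm_mult)
    also have "\<dots> \<le> cmod (d k) * (2 * real k * s)" by (intro mult_left_mono sinb) auto
    also have "\<dots> = 2 * s * (real k * cmod (d k))" by (simp add: algebra_simps)
    also have "\<dots> \<le> 2 * s * eps" using small[OF k] s_def by (intro mult_left_mono) auto
    finally show ?thesis by (simp add: algebra_simps)
  qed
  show ?thesis
  proof (cases "s = 0")
    case True
    then have z: "d k * of_real (sin (real k * x)) = 0" for k using sinb[of k] by simp
    have "(\<Sum>k\<in>{n..<q}. d k * of_real (sin (real k * x))) = 0" by (simp only: z sum.neutral_const)
    then show ?thesis using eps0 M by simp
  next
    case False
    then have s0: "s > 0" unfolding s_def by simp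
    have sne: "sin (x/2) \<noteq> 0" using False s_def by auto
    define p where "p = max n (nat \<lceil>1/s\<rceil>)"
    have ps: "real p * s \<ge> 1"
    proof -
      have "real p \<ge> 1/s" unfolding p_def by linarith
      then show ?thesis using s0 by (simp add: field_simps)
    qed
    have bigk: "cmod (d k) * (1/s) \<le> eps" if k: "k \<ge> p" for k
    proof -
      have kP: "k \<ge> P" using k n unfolding p_def by auto
      have "real k * s \<ge> 1" using ps k s0 by (smt (verit) mult_right_mono of_nat_mono)
      then have "cmod (d k) \<le> cmod (d k) * (real k * s)" by (simp add: mult_le_cancel_left1)
      also have "\<dots> = s * (real k * cmod (d k))" by (simp add: algebra_simps)
      also have "\<dots> \<le> s * eps" using small[OF kP] s0 by (intro mult_left_mono) auto
      finally show ?thesis using s0 by (simp add: field_simps)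
    qed
    show ?thesis
    proof (cases "q \<le> n")
      case True then show ?thesis using eps0 M by simp
    next
      case False
      define r where "r = min p q"
      have nr: "n \<le> r" "r \<le> q" using False unfolding r_def p_def by auto
      have split: "(\<Sum>k\<in>{n..<q}. d k * of_real (sin (real k * x))) =
          (\<Sum>k\<in>{n..<r}. d k * of_real (sin (real k * x))) + (\<Sum>k\<in>{r..<q}. d k * of_real (sin (real k * x)))"
        using nr by (simp add: sum.atLeastLessThan_concat)
      have cnt: "real (r - n) * s \<le> 1"
      proof (cases "r \<le> n")
        case True then show ?thesis by simp
      next
        case False
        then have "p > n" unfolding r_def by auto
        then have "p = nat \<lceil>1/s\<rceil>" unfolding p_def by auto
        moreover have "1/s > 0" using s0 by simp
        then have "\<lceil>1/s\<rceil> \<ge> 0" by linarith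
        ultimately have "real p = of_int \<lceil>1/s\<rceil>" by simp
        then have "real p < 1/s + 1" by linarith
        moreover have "r - n \<le> p - 1" using \<open>p > n\<close> n P unfolding r_def by auto
        moreover have "real (r - n) \<le> real p - 1"
        proof -
          have "r - n + 1 \<le> p" using \<open>r - n \<le> p - 1\<close> \<open>p > n\<close> by linarith
          then have "real (r - n + 1) \<le> real p" by (rule of_nat_mono)
          then show ?thesis by simp
        qed
        ultimately have "real (r - n) < 1/s" by linarith
        then show ?thesis using s0 by (simp add: field_simps)
      qed
      have low: "cmod (\<Sum>k\<in>{n..<r}. d k * of_real (sin (real k * x))) \<le> 2 * eps"
      proof -
        have "cmod (\<Sum>k\<in>{n..<r}. d k * of_real (sin (real k * x))) \<le> (\<Sum>k\<in>{n..<r}. cmod (d k * of_real (sin (real k * x))))"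
          by (rule norm_sum)
        also have "\<dots> \<le> (\<Sum>k\<in>{n..<r}. 2 * eps * s)" using n by (intro sum_mono termb) auto
        also have "\<dots> = 2 * eps * (real (r - n) * s)" by simp
        also have "\<dots> \<le> 2 * eps" using cnt eps0 by (simp add: mult_left_le)
        finally show ?thesis .
      qed
      have high: "cmod (\<Sum>k\<in>{r..<q}. d k * of_real (sin (real k * x))) \<le> (2 + 2 * M) * eps"
      proof (cases "r = q")
        case True then show ?thesis using eps0 M by simp
      next
        case False
        then have rp: "r = p" "p \<le> q" unfolding r_def by auto
        have Wd: "sin (real k * x) = W (Suc k) x - W k x" for k by (simp add: W_def)
        have "(\<Sum>k\<in>{r..<q}. d k * of_real (sin (real k * x))) =
           d q * of_real (W q x) - d p * of_real (W p x) - (\<Sum>k\<in>{p..<q}. (d (Suc k) - d k) * of_real (W (Suc k) x))"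
          unfolding Wd rp using abel[OF rp(2), of d "\<lambda>k. W k x"] by simp
        also have "cmod \<dots> \<le> cmod (d q * of_real (W q x)) + cmod (d p * of_real (W p x)) + cmod (\<Sum>k\<in>{p..<q}. (d (Suc k) - d k) * of_real (W (Suc k) x))"
          by (rule order_trans[OF norm_triangle_ineq4]) (simp add: norm_triangle_ineq4)
        also have "cmod (d q * of_real (W q x)) \<le> eps"
        proof -
          have "cmod (d q * of_real (W q x)) = cmod (d q) * \<bar>W q x\<bar>" by (simp add: norm_mult)
          also have "\<dots> \<le> cmod (d q) * (1/s)" using W_bound[OF sne] s_def by (intro mult_left_mono) auto
          also have "\<dots> \<le> eps" using bigk rp by auto
          finally show ?thesis .
        qed
        also have "cmod (d p * of_real (W p x)) \<le> eps"
        proof -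
          have "cmod (d p * of_real (W p x)) = cmod (d p) * \<bar>W p x\<bar>" by (simp add: norm_mult)
          also have "\<dots> \<le> cmod (d p) * (1/s)" using W_bound[OF sne] s_def by (intro mult_left_mono) auto
          also have "\<dots> \<le> eps" using bigk rp by auto
          finally show ?thesis .
        qed
        also have "cmod (\<Sum>k\<in>{p..<q}. (d (Suc k) - d k) * of_real (W (Suc k) x)) \<le> 2 * M * eps"
        proof -
          have "cmod (\<Sum>k\<in>{p..<q}. (d (Suc k) - d k) * of_real (W (Suc k) x)) \<le> (\<Sum>k\<in>{p..<q}. cmod (d k - d (Suc k)) * (1/s))"
            apply (rule order_trans[OF norm_sum], rule sum_mono)
          proof -
            fix k
            have "cmod (d k - d (Suc k)) * \<bar>W (Suc k) x\<bar> \<le> cmod (d k - d (Suc k)) * (1/s)"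
              using W_bound[OF sne] s_def by (intro mult_left_mono) auto
            then show "cmod ((d (Suc k) - d k) * complex_of_real (W (Suc k) x)) \<le> cmod (d k - d (Suc k)) * (1 / s)"
              by (simp add: norm_mult norm_minus_commute)
          qed
          also have "\<dots> = (\<Sum>k\<in>{p..<q}. cmod (d k - d (Suc k))) * (1/s)" by (simp only: sum_distrib_right)
          also have "\<dots> \<le> (2 * M * eps / real p) * (1/s)"
            using V_bound[OF gbv N0 M small P, of p q] n s0 unfolding p_def by (intro mult_right_mono) auto
          also have "\<dots> = 2 * M * eps / (real p * s)" by simp
          also have "\<dots> \<le> 2 * M * eps / 1" using ps M eps0 by (intro divide_left_mono) auto
          also have "\<dots> = 2 * M * eps" by simp
          finally show ?thesis .
        qed
        finally show ?thesis by (simp add: algebra_simps)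
      qed
      show ?thesis unfolding split using low high norm_triangle_ineq[of "\<Sum>k\<in>{n..<r}. d k * of_real (sin (real k * x))" "\<Sum>k\<in>{r..<q}. d k * of_real (sin (real k * x))"]
        by (simp add: algebra_simps)
    qed
  qed
qed



lemma decay:
  fixes d :: "nat \<Rightarrow> complex"
  assumes gbv: "\<And>m. m \<ge> 1 \<Longrightarrow> (\<Sum>n\<in>{m..<2*m+1}. cmod (d n - d (Suc n))) \<le> M * Max ((\<lambda>n. cmod (d n)) ` {m..<m+N0})"
    and N0: "N0 \<ge> 1" and M: "M > 0"
    and blocks: "\<And>e. e > 0 \<Longrightarrow> \<exists>N. \<forall>m\<ge>N. (\<Sum>k\<in>{m..<2*m+1}. cmod (d k)) \<le> e"
  shows "(\<lambda>n. of_nat n * d n) \<longlonglongrightarrow> 0"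
proof -
  define T where "T m = (\<Sum>k\<in>{m..<4*m+1}. cmod (d k))" for m
  define C where "C = 1 + M * real N0"
  have C0: "C > 0" unfolding C_def using M by (simp add: add_pos_nonneg)
  have Tsplit: "T m \<le> (\<Sum>k\<in>{m..<2*m+1}. cmod (d k)) + (\<Sum>k\<in>{2*m..<2*(2*m)+1}. cmod (d k))" for m
  proof -
    have "T m = (\<Sum>k\<in>{m..<2*m+1}. cmod (d k)) + (\<Sum>k\<in>{2*m+1..<4*m+1}. cmod (d k))"
      unfolding T_def by (subst sum.atLeastLessThan_concat) auto
    also have "(\<Sum>k\<in>{2*m+1..<4*m+1}. cmod (d k)) \<le> (\<Sum>k\<in>{2*m..<2*(2*m)+1}. cmod (d k))"
      by (intro sum_mono2) auto
    finally show ?thesis by simp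
  qed
  have key: "real k * cmod (d k) \<le> 2 * C * T (k - k div 2)" if k: "k \<ge> N0" for k
  proof -
    define lo where "lo = k - k div 2"
    have k1: "k \<ge> 1" using k N0 by simp
    have step: "cmod (d k) \<le> cmod (d m) + M * (\<Sum>r<N0. cmod (d (m + r)))" if m: "m \<in> {lo..<k+1}" for m
    proof -
      have m1: "m \<ge> 1" "m \<le> k" "k \<le> 2*m" using m k1 unfolding lo_def by auto
      have "d k - d m = (\<Sum>i\<in>{m..<k}. d (Suc i) - d i)" using sum_Suc_diff'[of m k d] m1 by simp
      then have "cmod (d k - d m) \<le> (\<Sum>i\<in>{m..<k}. cmod (d i - d (Suc i)))"
        by (simp add: norm_minus_commute order_trans[OF norm_sum])
      also have "\<dots> \<le> (\<Sum>i\<in>{m..<2*m+1}. cmod (d i - d (Suc i)))" using m1 by (intro sum_mono2) auto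
      also have "\<dots> \<le> M * Max ((\<lambda>n. cmod (d n)) ` {m..<m+N0})" by (rule gbv[OF m1(1)])
      also have "Max ((\<lambda>n. cmod (d n)) ` {m..<m+N0}) \<le> (\<Sum>i\<in>{m..<m+N0}. cmod (d i))"
        using N0 by (subst Max_le_iff) (auto intro: member_le_sum)
      also have "(\<Sum>i\<in>{m..<m+N0}. cmod (d i)) = (\<Sum>r<N0. cmod (d (m + r)))"
        using sum.shift_bounds_nat_ivl[of "\<lambda>i. cmod (d i)" 0 m N0] by (simp add: lessThan_atLeast0 add.commute)
      finally have "cmod (d k - d m) \<le> M * (\<Sum>r<N0. cmod (d (m + r)))" using M by simp
      then show ?thesis using norm_triangle_ineq2[of "d k" "d m"] by linarith
    qed
    have "(\<Sum>m\<in>{lo..<k+1}. cmod (d k)) \<le> (\<Sum>m\<in>{lo..<k+1}. cmod (d m) + M * (\<Sum>r<N0. cmod (d (m + r))))"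
      by (rule sum_mono) (rule step)
    also have "\<dots> = (\<Sum>m\<in>{lo..<k+1}. cmod (d m)) + M * (\<Sum>m\<in>{lo..<k+1}. \<Sum>r<N0. cmod (d (m + r)))"
      by (simp only: sum.distrib sum_distrib_left)
    also have "(\<Sum>m\<in>{lo..<k+1}. \<Sum>r<N0. cmod (d (m + r))) = (\<Sum>r<N0. \<Sum>m\<in>{lo..<k+1}. cmod (d (m + r)))"
      by (rule sum.swap)
    also have "(\<Sum>m\<in>{lo..<k+1}. cmod (d m)) \<le> T lo"
      unfolding T_def lo_def by (intro sum_mono2) auto
    also have "(\<Sum>r<N0. \<Sum>m\<in>{lo..<k+1}. cmod (d (m + r))) \<le> (\<Sum>r<N0. T lo)"
    proof (rule sum_mono)
      fix r assume r: "r \<in> {..<N0}"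
      have "(\<Sum>m\<in>{lo..<k+1}. cmod (d (m + r))) = (\<Sum>i\<in>{lo+r..<k+1+r}. cmod (d i))"
        by (rule sum.shift_bounds_nat_ivl[symmetric])
      also have "\<dots> \<le> T lo" unfolding T_def using r k by (intro sum_mono2) (auto simp: lo_def)
      finally show "(\<Sum>m\<in>{lo..<k+1}. cmod (d (m + r))) \<le> T lo" .
    qed
    finally have "real (k + 1 - lo) * cmod (d k) \<le> T lo + M * (real N0 * T lo)"
      using M by (simp add: mult_left_mono)
    moreover have "real k \<le> 2 * real (k + 1 - lo)" unfolding lo_def by linarith
    ultimately have "real k * cmod (d k) \<le> 2 * (T lo + M * (real N0 * T lo))"
    proof -
      assume a1: "real (k + 1 - lo) * cmod (d k) \<le> T lo + M * (real N0 * T lo)"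
        and a2: "real k \<le> 2 * real (k + 1 - lo)"
      have "real k * cmod (d k) \<le> (2 * real (k + 1 - lo)) * cmod (d k)"
        using a2 by (intro mult_right_mono) auto
      moreover have "(2 * real (k + 1 - lo)) * cmod (d k) = 2 * (real (k + 1 - lo) * cmod (d k))" by simp
      ultimately have "real k * cmod (d k) \<le> 2 * (real (k + 1 - lo) * cmod (d k))" by simp
      from order_trans[OF this mult_left_mono[OF a1]] show ?thesis by simp
    qed
    then show ?thesis unfolding C_def lo_def by (simp add: algebra_simps)
  qed
  show ?thesis
  proof (rule LIMSEQ_I)
    fix e :: real assume e: "e > 0"
    obtain N where N: "\<And>m. m \<ge> N \<Longrightarrow> (\<Sum>k\<in>{m..<2*m+1}. cmod (d k)) \<le> e / (8 * C)"
      using blocks[of "e / (8*C)"] e C0 by auto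
    show "\<exists>no. \<forall>n\<ge>no. norm (of_nat n * d n - 0) < e"
    proof (intro exI allI impI)
      fix n assume n: "n \<ge> 2 * N + N0"
      have lo: "n - n div 2 \<ge> N" using n by linarith
      have "T (n - n div 2) \<le> e / (8*C) + e / (8*C)"
        using Tsplit[of "n - n div 2"] N[OF lo] N[of "2 * (n - n div 2)"] lo by force
      then have "2 * C * T (n - n div 2) \<le> 2 * C * (e/(8*C) + e/(8*C))" using C0 by (intro mult_left_mono) auto
      also have "\<dots> = e / 2" using C0 by (simp add: field_simps)
      finally have "real n * cmod (d n) \<le> e / 2" using key[of n] n by simp
      then show "norm (of_nat n * d n - 0) < e" using e by (simp add: norm_mult)
    qed
  qed
qed



lemma gbv_conv:
  fixes c :: "int \<Rightarrow> complex"
  assumes H: "\<forall>m::int. m \<ge> 1 \<longrightarrow>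
              (\<Sum>n = m..2 * m. cmod (c n - c (n + 1)))
                \<le> M * Max ((\<lambda>n. cmod (c n)) ` {m..<m + int N0})"
    and m: "m \<ge> 1"
  shows "(\<Sum>n\<in>{m..<2*m+1}. cmod (c (int n) - c (int (Suc n)))) \<le> M * Max ((\<lambda>n. cmod (c (int n))) ` {m..<m+N0})"
proof -
  have e1: "{int m..2 * int m} = int ` {m..<2*m+1}"
    by (simp add: image_int_atLeastLessThan) (auto)
  have e2: "{int m..<int m + int N0} = int ` {m..<m+N0}"
    by (simp add: image_int_atLeastLessThan)
  have "(\<Sum>n\<in>{m..<2*m+1}. cmod (c (int n) - c (int (Suc n)))) = (\<Sum>n = int m..2 * int m. cmod (c n - c (n + 1)))"
    unfolding e1 by (subst sum.reindex) (auto simp: add.commute)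
  also have "\<dots> \<le> M * Max ((\<lambda>n. cmod (c n)) ` {int m..<int m + int N0})" using H m by auto
  also have "(\<lambda>n. cmod (c n)) ` {int m..<int m + int N0} = (\<lambda>n. cmod (c (int n))) ` {m..<m+N0}"
    unfolding e2 image_image by simp
  finally show ?thesis .
qed

lemma ps_periodic: "partial_sum c n (x + 2 * pi) = partial_sum c n x"
proof -
  have "exp (\<i> * of_int k * of_real (x + 2 * pi)) = exp (\<i> * of_int k * of_real x)" for k :: int
  proof -
    have "\<i> * of_int k * of_real (x + 2 * pi) = (2 * of_int k * of_real pi) * \<i> + \<i> * of_int k * of_real x"
      by (simp add: algebra_simps)
    then have "exp (\<i> * of_int k * of_real (x + 2 * pi)) = exp ((2 * of_int k * of_real pi) * \<i>) * exp (\<i> * of_int k * of_real x)"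
      by (simp add: exp_add)
    also have "exp ((2 * of_int k * of_real pi) * \<i>) = 1"
      using exp_integer_2pi[of "of_int k"] by simp
    finally show ?thesis by simp
  qed
  then show ?thesis unfolding partial_sum_def by simp
qed

lemma ps_cont: "continuous_on UNIV (partial_sum c n)"
  unfolding partial_sum_def by (intro continuous_intros)

lemma sf_eq: "series_fun c = (\<lambda>x. lim (\<lambda>n. partial_sum c n x))"
  by (rule ext) (simp add: series_fun_def)

lemma sin_lower: assumes "m \<ge> 1" "m \<le> j" "j \<le> 2*m"
  shows "sin (real j * (pi / (4 * real m))) \<ge> 1/2"
proof -
  have m0: "real m > 0" using assms by simp
  have a: "pi/4 \<le> real j * (pi / (4 * real m))"
  proof -
    have "pi/4 = real m * (pi / (4 * real m))" using m0 by simp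
    also have "\<dots> \<le> real j * (pi / (4 * real m))" using assms by (intro mult_right_mono) auto
    finally show ?thesis .
  qed
  have b: "real j * (pi / (4 * real m)) \<le> pi/2"
  proof -
    have "real j * (pi / (4 * real m)) \<le> (2 * real m) * (pi / (4 * real m))" using assms by (intro mult_right_mono) auto
    also have "\<dots> = pi/2" using m0 by simp
    finally show ?thesis .
  qed
  have "sin (pi/4) \<le> sin (real j * (pi / (4 * real m)))"
    using a b pi_gt_zero by (intro sin_mono_le_eq[THEN iffD2]) linarith+
  moreover have "sqrt 2 / 2 \<ge> 1/2" by simp
  ultimately show ?thesis unfolding sin_45 by linarith
qed



lemma necessity:
  fixes c :: "int \<Rightarrow> complex" and \<theta>0 :: real
  assumes th: "0 \<le> \<theta>0" "\<theta>0 < pi / 2"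
    and sec: "\<And>n::int. n \<ge> 1 \<Longrightarrow> c n + c (- n) \<in> sector \<theta>0 \<and> c n - c (- n) \<in> sector \<theta>0"
    and gbv: "\<And>m. m \<ge> 1 \<Longrightarrow> (\<Sum>n\<in>{m..<2*m+1}. cmod (c (int n) - c (int (Suc n)))) \<le> M * Max ((\<lambda>n. cmod (c (int n))) ` {m..<m+N0})"
    and N0: "N0 \<ge> 1" and M: "M > 0"
    and UL: "uniform_limit UNIV (partial_sum c) (series_fun c) sequentially"
  shows "(\<lambda>n. of_nat n * c (int n)) \<longlonglongrightarrow> 0 \<and> summable (\<lambda>n. cmod (c (int (Suc n)) + c (- int (Suc n))))"
proof -
  define a where "a k = c (int k) + c (- int k)" for k :: nat
  define b where "b k = c (int k) - c (- int k)" for k :: nat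
  define g where "g = cos \<theta>0"
  have g0: "g > 0" unfolding g_def using th by (intro cos_gt_zero_pi) auto
  have aRe: "g * cmod (a k) \<le> Re (a k)" if "k \<ge> 1" for k
  proof -
    have "a k \<in> sector \<theta>0" unfolding a_def using sec[of "int k"] that by auto
    from sector_Re[OF this th(2)] show ?thesis unfolding g_def .
  qed
  have bRe: "g * cmod (b k) \<le> Re (b k)" if "k \<ge> 1" for k
  proof -
    have "b k \<in> sector \<theta>0" unfolding b_def using sec[of "int k"] that by auto
    from sector_Re[OF this th(2)] show ?thesis unfolding g_def .
  qed
  have UC: "uniformly_Cauchy_on UNIV (partial_sum c)"
    using UL by (intro uniformly_convergent_Cauchy) (auto simp: uniformly_convergent_on_def)
  have tm0: "tm c k 0 = a k" for k unfolding tm_def a_def by simp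
  have suma: "summable (\<lambda>k. a (Suc k))"
  proof -
    have "(\<lambda>n. partial_sum c n 0) \<longlonglongrightarrow> series_fun c 0"
      using tendsto_uniform_limitI[OF UL, of 0] by simp
    then have "(\<lambda>n. partial_sum c n 0 - c 0) \<longlonglongrightarrow> series_fun c 0 - c 0"
      by (intro tendsto_diff) auto
    then have "(\<lambda>n. \<Sum>k<n. a (Suc k)) \<longlonglongrightarrow> series_fun c 0 - c 0"
      by (simp add: ps_eq tm0)
    then show ?thesis unfolding summable_def sums_def by blast
  qed
  have sumabs: "summable (\<lambda>k. cmod (a (Suc k)))"
  proof (rule summable_comparison_test)
    show "summable (\<lambda>k. Re (a (Suc k)) / g)" using summable_Re[OF suma] by (rule summable_divide)
    show "\<exists>N. \<forall>n\<ge>N. norm (cmod (a (Suc n))) \<le> Re (a (Suc n)) / g"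
      using aRe g0 by (auto simp: field_simps mult.commute)
  qed
  have blocks: "\<exists>N. \<forall>m\<ge>N. (\<Sum>k\<in>{m..<2*m+1}. cmod (c (int k))) \<le> e" if e: "e > 0" for e
  proof -
    obtain N1 where N1: "\<And>x m n. m \<ge> N1 \<Longrightarrow> n \<ge> N1 \<Longrightarrow> dist (partial_sum c m x) (partial_sum c n x) < g * e / 2"
      using UC g0 e unfolding uniformly_Cauchy_on_def by (metis UNIV_I half_gt_zero mult_pos_pos)
    obtain N2 where N2: "\<And>m n. m \<ge> N2 \<Longrightarrow> norm (\<Sum>k\<in>{m..<n}. cmod (a (Suc k))) < e"
      using sumabs e unfolding summable_Cauchy by metis
    show ?thesis
    proof (intro exI allI impI)
      fix m assume m: "m \<ge> N1 + N2 + 1"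
      define m1 where "m1 = m - 1"
      have mm: "m = Suc m1" "m1 \<ge> N1" "m1 \<ge> N2" "m1 \<le> 2*m" using m unfolding m1_def by auto
      define x where "x = pi / (4 * real m)"
      have D: "partial_sum c (2*m) y - partial_sum c m1 y = (\<Sum>k\<in>{m1..<2*m}. tm c (Suc k) y)" for y
        using ps_diff[OF mm(4)] .
      have "(\<Sum>k\<in>{m1..<2*m}. tm c (Suc k) x) - (\<Sum>k\<in>{m1..<2*m}. tm c (Suc k) (-x))
          = 2 * \<i> * (\<Sum>k\<in>{m1..<2*m}. b (Suc k) * of_real (sin (real (Suc k) * x)))"
        by (simp add: sum_subtractf[symmetric] tm_odd sum_distrib_left b_def algebra_simps del: of_nat_Suc)
      then have "2 * cmod (\<Sum>k\<in>{m1..<2*m}. b (Suc k) * of_real (sin (real (Suc k) * x)))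
          = cmod ((partial_sum c (2*m) x - partial_sum c m1 x) - (partial_sum c (2*m) (-x) - partial_sum c m1 (-x)))"
        unfolding D by (simp add: norm_mult)
      also have "\<dots> \<le> cmod (partial_sum c (2*m) x - partial_sum c m1 x) + cmod (partial_sum c (2*m) (-x) - partial_sum c m1 (-x))"
        by (rule norm_triangle_ineq4)
      also have "\<dots> < g * e / 2 + g * e / 2"
        using N1[of "2*m" m1 x] N1[of "2*m" m1 "-x"] mm by (intro add_strict_mono) (auto simp: dist_norm)
      finally have bs: "cmod (\<Sum>k\<in>{m1..<2*m}. b (Suc k) * of_real (sin (real (Suc k) * x))) < g * e / 2" by linarith
      have "(\<Sum>k\<in>{m1..<2*m}. g * cmod (b (Suc k)) * (1/2)) \<le> (\<Sum>k\<in>{m1..<2*m}. Re (b (Suc k) * of_real (sin (real (Suc k) * x))))"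
      proof (rule sum_mono)
        fix k assume k: "k \<in> {m1..<2*m}"
        have s: "sin (real (Suc k) * x) \<ge> 1/2" unfolding x_def
          using k mm by (intro sin_lower) auto
        have "g * cmod (b (Suc k)) * (1/2) \<le> Re (b (Suc k)) * sin (real (Suc k) * x)"
        proof (rule mult_mono)
          show "g * cmod (b (Suc k)) \<le> Re (b (Suc k))" using bRe[of "Suc k"] by simp
          have "0 \<le> g * cmod (b (Suc k))" using g0 by simp
          then show "0 \<le> Re (b (Suc k))" using bRe[of "Suc k"] by simp
        qed (use s in auto)
        then show "g * cmod (b (Suc k)) * (1/2) \<le> Re (b (Suc k) * of_real (sin (real (Suc k) * x)))" by simp
      qed
      also have "\<dots> = Re (\<Sum>k\<in>{m1..<2*m}. b (Suc k) * of_real (sin (real (Suc k) * x)))" by (simp add: Re_sum)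
      also have "\<dots> \<le> cmod (\<Sum>k\<in>{m1..<2*m}. b (Suc k) * of_real (sin (real (Suc k) * x)))" by (rule complex_Re_le_cmod)
      finally have f1: "(\<Sum>k\<in>{m1..<2*m}. g * cmod (b (Suc k)) * (1/2)) \<le> cmod (\<Sum>k\<in>{m1..<2*m}. b (Suc k) * of_real (sin (real (Suc k) * x)))" .
      have f2: "(\<Sum>k\<in>{m1..<2*m}. g * cmod (b (Suc k)) * (1/2)) = g * (\<Sum>k\<in>{m1..<2*m}. cmod (b (Suc k))) / 2"
        by (simp add: sum_distrib_left sum_divide_distrib)
      have "g * (\<Sum>k\<in>{m1..<2*m}. cmod (b (Suc k))) / 2 < g * e / 2" using f1 f2 bs by linarith
      then have bsum: "(\<Sum>k\<in>{m1..<2*m}. cmod (b (Suc k))) < e" using g0 by (simp add: field_simps)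
      have asum: "(\<Sum>k\<in>{m1..<2*m}. cmod (a (Suc k))) < e" using N2[OF mm(3), of "2*m"]
        by (simp add: sum_nonneg)
      have "(\<Sum>k\<in>{m..<2*m+1}. cmod (c (int k))) = (\<Sum>k\<in>{m1..<2*m}. cmod (c (int (Suc k))))"
        using sum.shift_bounds_Suc_ivl[of "\<lambda>k. cmod (c (int k))" m1 "2*m"] mm(1) by simp
      also have "\<dots> \<le> (\<Sum>k\<in>{m1..<2*m}. (cmod (a (Suc k)) + cmod (b (Suc k))) / 2)"
      proof (rule sum_mono)
        fix k
        have "2 * c (int (Suc k)) = a (Suc k) + b (Suc k)" unfolding a_def b_def by simp
        then have "2 * cmod (c (int (Suc k))) = cmod (a (Suc k) + b (Suc k))"
          by (metis norm_mult norm_numeral)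
        then show "cmod (c (int (Suc k))) \<le> (cmod (a (Suc k)) + cmod (b (Suc k))) / 2"
          using norm_triangle_ineq[of "a (Suc k)" "b (Suc k)"] by simp
      qed
      also have "\<dots> = ((\<Sum>k\<in>{m1..<2*m}. cmod (a (Suc k))) + (\<Sum>k\<in>{m1..<2*m}. cmod (b (Suc k)))) / 2"
        by (simp only: sum_divide_distrib[symmetric] sum.distrib)
      also have "\<dots> \<le> e" using asum bsum by simp
      finally show "(\<Sum>k\<in>{m..<2*m+1}. cmod (c (int k))) \<le> e" .
    qed
  qed
  have "(\<lambda>n. of_nat n * (\<lambda>k. c (int k)) n) \<longlonglongrightarrow> 0"
    by (rule decay[of "\<lambda>k. c (int k)" M N0]) (use gbv N0 M blocks in auto)
  then show ?thesis using sumabs unfolding a_def by simp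
qed



lemma sufficiency:
  fixes c :: "int \<Rightarrow> complex"
  assumes gbv: "\<And>m. m \<ge> 1 \<Longrightarrow> (\<Sum>n\<in>{m..<2*m+1}. cmod (c (int n) - c (int (Suc n)))) \<le> M * Max ((\<lambda>n. cmod (c (int n))) ` {m..<m+N0})"
    and N0: "N0 \<ge> 1" and M: "M > 0"
    and tend: "(\<lambda>n. of_nat n * c (int n)) \<longlonglongrightarrow> 0"
    and summ: "summable (\<lambda>n. cmod (c (int (Suc n)) + c (- int (Suc n))))"
  shows "uniformly_Cauchy_on UNIV (partial_sum c)"
proof (rule uniformly_Cauchy_onI')
  fix e :: real assume e: "e > 0"
  define eps where "eps = e / (8 * (2 + M))"
  have eps: "eps > 0" unfolding eps_def using e M by simp
  obtain P0 where P0: "\<And>n. n \<ge> P0 \<Longrightarrow> norm (of_nat n * c (int n) - 0) < eps"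
    using LIMSEQ_D[OF tend eps] by blast
  define P where "P = P0 + 1"
  have small: "real k * cmod (c (int k)) \<le> eps" if "k \<ge> P" for k
    using P0[of k] that unfolding P_def by (simp add: norm_mult)
  obtain N2 where N2: "\<And>m n. m \<ge> N2 \<Longrightarrow> norm (\<Sum>k\<in>{m..<n}. cmod (c (int (Suc k)) + c (- int (Suc k)))) < e/2"
    using summ e unfolding summable_Cauchy by (metis half_gt_zero)
  show "\<exists>M'. \<forall>x\<in>UNIV. \<forall>m\<ge>M'. \<forall>n>m. dist (partial_sum c m x) (partial_sum c n x) < e"
  proof (intro exI ballI allI impI)
    fix x m n assume m: "m \<ge> P + N2" and n: "n > m"
    have "dist (partial_sum c m x) (partial_sum c n x) = cmod (\<Sum>k\<in>{m..<n}. tm c (Suc k) x)"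
      using ps_diff[of m n c x] n by (metis dist_norm dist_commute less_imp_le)
    also have "(\<Sum>k\<in>{m..<n}. tm c (Suc k) x) =
        (\<Sum>k\<in>{m..<n}. (c (int (Suc k)) + c (- int (Suc k))) * exp (- (\<i> * of_nat (Suc k) * of_real x)))
        + 2 * \<i> * (\<Sum>k\<in>{m..<n}. c (int (Suc k)) * of_real (sin (real (Suc k) * x)))"
      unfolding tm_eq by (simp add: sum.distrib sum_distrib_left algebra_simps del: of_nat_Suc)
    also have "cmod \<dots> \<le> cmod (\<Sum>k\<in>{m..<n}. (c (int (Suc k)) + c (- int (Suc k))) * exp (- (\<i> * of_nat (Suc k) * of_real x)))
        + cmod (2 * \<i> * (\<Sum>k\<in>{m..<n}. c (int (Suc k)) * of_real (sin (real (Suc k) * x))))"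
      by (rule norm_triangle_ineq)
    also have "cmod (\<Sum>k\<in>{m..<n}. (c (int (Suc k)) + c (- int (Suc k))) * exp (- (\<i> * of_nat (Suc k) * of_real x)))
        < e / 2"
    proof -
      have "cmod (\<Sum>k\<in>{m..<n}. (c (int (Suc k)) + c (- int (Suc k))) * exp (- (\<i> * of_nat (Suc k) * of_real x)))
          \<le> (\<Sum>k\<in>{m..<n}. cmod ((c (int (Suc k)) + c (- int (Suc k))) * exp (- (\<i> * of_nat (Suc k) * of_real x))))"
        by (rule norm_sum)
      also have "\<dots> = (\<Sum>k\<in>{m..<n}. cmod (c (int (Suc k)) + c (- int (Suc k))))"
        by (simp add: norm_mult del: of_nat_Suc)
      also have "\<dots> < e/2" using N2[of m n] m by (simp add: sum_nonneg del: of_nat_Suc)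
      finally show ?thesis .
    qed
    also have "cmod (2 * \<i> * (\<Sum>k\<in>{m..<n}. c (int (Suc k)) * of_real (sin (real (Suc k) * x)))) \<le> e / 2"
    proof -
      have "(\<Sum>k\<in>{m..<n}. c (int (Suc k)) * of_real (sin (real (Suc k) * x)))
          = (\<Sum>k\<in>{Suc m..<Suc n}. c (int k) * of_real (sin (real k * x)))"
        by (rule sum.shift_bounds_Suc_ivl[symmetric])
      also have "cmod \<dots> \<le> (4 + 2 * M) * eps"
        by (rule sine_tail[OF gbv N0 M small]) (use m in \<open>auto simp: P_def\<close>)
      finally have "cmod (\<Sum>k\<in>{m..<n}. c (int (Suc k)) * of_real (sin (real (Suc k) * x))) \<le> (4 + 2 * M) * eps" .
      then have "cmod (2 * \<i> * (\<Sum>k\<in>{m..<n}. c (int (Suc k)) * of_real (sin (real (Suc k) * x)))) \<le> 2 * ((4 + 2 * M) * eps)"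
        by (simp add: norm_mult del: of_nat_Suc)
      also have "2 * ((4 + 2 * M) * eps) = e / 2" unfolding eps_def using M by (simp add: field_simps)
      finally show ?thesis .
    qed
    finally show "dist (partial_sum c m x) (partial_sum c n x) < e" by simp
  qed
qed

theorem theorem1:
  fixes c :: "int \<Rightarrow> complex" and \<theta>0 :: real
  assumes "0 \<le> \<theta>0" and "\<theta>0 < pi / 2"
    and "\<And>n::int. n \<ge> 1 \<Longrightarrow> c n + c (- n) \<in> sector \<theta>0 \<and> c n - c (- n) \<in> sector \<theta>0"
    and "\<exists>N0::nat. N0 \<ge> 1 \<and> (\<exists>M::real. M > 0 \<and>
           (\<forall>m::int. m \<ge> 1 \<longrightarrow>
              (\<Sum>n = m..2 * m. cmod (c n - c (n + 1)))
                \<le> M * Max ((\<lambda>n. cmod (c n)) ` {m..<m + int N0})))"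
  shows "((\<forall>x. convergent (\<lambda>n. partial_sum c n x))
          \<and> continuous_on UNIV (series_fun c)
          \<and> (\<forall>x. series_fun c (x + 2 * pi) = series_fun c x)
          \<and> uniform_limit UNIV (partial_sum c) (series_fun c) sequentially)
     \<longleftrightarrow>
         ((\<lambda>n. of_nat n * c (int n)) \<longlonglongrightarrow> 0
          \<and> summable (\<lambda>n. cmod (c (int (Suc n)) + c (- int (Suc n)))))"
proof -
  obtain N0 M where N0: "N0 \<ge> 1" and M: "M > 0" and H: "\<forall>m::int. m \<ge> 1 \<longrightarrow>
              (\<Sum>n = m..2 * m. cmod (c n - c (n + 1)))
                \<le> M * Max ((\<lambda>n. cmod (c n)) ` {m..<m + int N0})"
    using assms(4) by blast
  have gbv: "\<And>m. m \<ge> 1 \<Longrightarrow> (\<Sum>n\<in>{m..<2*m+1}. cmod (c (int n) - c (int (Suc n)))) \<le> M * Max ((\<lambda>n. cmod (c (int n))) ` {m..<m+N0})"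
    by (rule gbv_conv[OF H])
  show ?thesis
  proof
    assume L: "(\<forall>x. convergent (\<lambda>n. partial_sum c n x))
          \<and> continuous_on UNIV (series_fun c)
          \<and> (\<forall>x. series_fun c (x + 2 * pi) = series_fun c x)
          \<and> uniform_limit UNIV (partial_sum c) (series_fun c) sequentially"
    show "(\<lambda>n. of_nat n * c (int n)) \<longlonglongrightarrow> 0 \<and> summable (\<lambda>n. cmod (c (int (Suc n)) + c (- int (Suc n))))"
      by (rule necessity[OF assms(1,2,3) gbv N0 M]) (use L in blast)+
  next
    assume R: "(\<lambda>n. of_nat n * c (int n)) \<longlonglongrightarrow> 0 \<and> summable (\<lambda>n. cmod (c (int (Suc n)) + c (- int (Suc n))))"
    have UC: "uniformly_Cauchy_on UNIV (partial_sum c)"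
      using sufficiency[OF gbv N0 M] R by blast
    have UL: "uniform_limit UNIV (partial_sum c) (series_fun c) sequentially"
      using Cauchy_uniformly_convergent[OF UC] unfolding uniformly_convergent_uniform_limit_iff sf_eq .
    have conv: "\<forall>x. convergent (\<lambda>n. partial_sum c n x)"
      using tendsto_uniform_limitI[OF UL] unfolding convergent_def by blast
    have cont: "continuous_on UNIV (series_fun c)"
      by (rule uniform_limit_theorem[OF _ UL]) (auto simp: ps_cont)
    have per: "\<forall>x. series_fun c (x + 2 * pi) = series_fun c x"
      by (simp add: series_fun_def ps_periodic)
    show "(\<forall>x. convergent (\<lambda>n. partial_sum c n x))
          \<and> continuous_on UNIV (series_fun c)
          \<and> (\<forall>x. series_fun c (x + 2 * pi) = series_fun c x)
          \<and> uniform_limit UNIV (partial_sum c) (series_fun c) sequentially"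
      using conv cont per UL by blast
  qed
qed

end
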